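(* Let $\delta\in(0,1)$ and $\iota=2\log(4(m+1)F/\delta)$. Suppose there is a Nash equilibrium $\pi^*$ satisfying the one-unit deviation assumption with respect to $\rho$, and let $C_{\mathrm{facility}}$ be the facility unilateral coefficient of $\pi^*$. Let $\pi^{\mathrm{out}}$ be the output of the surrogate-minimization procedure run with the facility-level estimator $\hat r$ and bonus $b$ defined in the context. Then, with probability at least $1-\delta$, $$\mathrm{Gap}(\pi^{\mathrm{out}})\le \frac{8\sqrt{m+1}\,C_{\mathrm{facility}}\,\iota\, F}{\sqrt n}.$$
   Context: Congestion game setting. There are $m\ge 1$ players and a finite facility set $\mathcal F$ with $F=|\mathcal F|$. Each player $i\in[m]$ has a nonempty finite action set $\mathcal A_i\subseteq 2^{\mathcal F}$; $\mathcal A=\prod_i\mathcal A_i$. For $f\in\mathcal F$ let $n^f(\bm a)=|\{i: f\in a_i\}|$. For each $f$ and $\ell\in\{1,\dots,m\}$ there is a reward distribution $R^f(\cdot\mid \ell)$ supported in $[-1,1]$ with mean $r^f(\ell)$; player $i$'s mean reward is $r_i(\bm a)=\sum_{f\in a_i} r^f(n^f(\bm a))$. A product policy is $\pi=\otimes_i\pi_i$ with $\pi_i\in\Delta(\mathcal A_i)$; $(\pi_i',\pi_{-i})$ replaces the $i$-th component. $V_i^\pi=\mathbb E_{\bm a\sim\pi}[r_i(\bm a)]$, $\mathrm{Gap}(\pi)=\max_i\big[\max_{\pi_i'}V_i^{(\pi_i',\pi_{-i})}-V_i^{\pi}\big]$, and a Nash equilibrium is a product policy with $\mathrm{Gap}=0$.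 Facility-level offline data: $\mathcal D=\{(\bm a^k,\bm r^k)\}_{k=1}^n$ where $\bm a^1,\dots,\bm a^n$ are i.i.d. from $\rho\in\Delta(\mathcal A)$, and, given the joint actions, for each $k$ and each facility $f$ with $n^f(\bm a^k)\ge1$ a reward $r^{f,k}\sim R^f(\cdot\mid n^f(\bm a^k))$ is drawn, all draws independent; $\bm r^k=\{r^{f,k}\}_{f:\,n^f(\bm a^k)\ge1}$. Estimator and bonus: for $f\in\mathcal F$ and $\ell\in\{0,\dots,m\}$ let $N^f(\ell)=|\{k: n^f(\bm a^k)=\ell\}|$. Define $\hat r_i(\bm a)=\sum_{f\in a_i}\frac{\sum_{k=1}^n r^{f,k}\,\mathbb 1\{n^f(\bm a^k)=n^f(\bm a)\}}{N^f(n^f(\bm a))\vee 1}$ and $b_i(\bm a)=\sum_{f\in a_i}\sqrt{\frac{\iota}{N^f(n^f(\bm a))\vee1}}$. Surrogate minimization: $\overline V_i^{\pi}=\mathbb E_{\bm a\sim\pi}[\hat r_i+b_i]$, $\underline V_i^{\pi}=\mathbb E_{\bm a\sim\pi}[\hat r_i-b_i]$, $\overline V_i^{\dagger,\pi_{-i}}=\max_{\pi_i'}\overline V_i^{(\pi_i',\pi_{-i})}$, and $\pi^{\mathrm{out}}\in\arg\min_{\pi\text{ product}}\max_i[\overline V_i^{\dagger,\pi_{-i}}-\underline V_i^{\pi}]$. Facility cumulative density: for a distribution $\pi$ on $\mathcal A$, $d^\pi_f(\ell)=\sum_{\bm a:\,n^f(\bm a)=\ell}\pi(\bm a)$. One-unit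 deviation assumption: for every $i\in[m]$, every $\pi_i\in\Delta(\mathcal A_i)$, every $f\in\mathcal F$ and $\ell\in\{0,\dots,m\}$, if $d^{(\pi_i,\pi^*_{-i})}_f(\ell)>0$ then $d^\rho_f(\ell)>0$. Facility unilateral coefficient: $C_{\mathrm{facility}}=\max\big\{ d^{(\pi_i',\pi^*_{-i})}_f(\ell)/d^\rho_f(\ell):\ i\in[m],\ \pi_i'\in\Delta(\mathcal A_i),\ f\in\mathcal F,\ \ell\in\{0,\dots,m\},\ d^\rho_f(\ell)>0\big\}$. *)

theory Defs
  imports "HOL-Probability.Probability"
begin

text \<open>Players are 0..<m, facilities are the elements of a finite type 'f (so F = CARD('f)).
  A joint action is a function nat => 'f set (meaningful on {..<m}, undefined elsewhere).\<close>

definition nf :: "nat \<Rightarrow> 'f \<Rightarrow> (nat \<Rightarrow> 'f set) \<Rightarrow> nat" where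
  "nf m f a = card {i \<in> {..<m}. f \<in> a i}"

definition prod_pol :: "nat \<Rightarrow> (nat \<Rightarrow> 'f set pmf) \<Rightarrow> (nat \<Rightarrow> 'f set) pmf" where
  "prod_pol m \<pi> = Pi_pmf {..<m} undefined \<pi>"

definition is_prod_policy :: "nat \<Rightarrow> (nat \<Rightarrow> 'f set set) \<Rightarrow> (nat \<Rightarrow> 'f set pmf) \<Rightarrow> bool" where
  "is_prod_policy m A \<pi> \<longleftrightarrow> (\<forall>i<m. set_pmf (\<pi> i) \<subseteq> A i)"

definition mean_rew :: "('f \<Rightarrow> nat \<Rightarrow> real measure) \<Rightarrow> 'f \<Rightarrow> nat \<Rightarrow> real" where
  "mean_rew R f l = integral\<^sup>L (R f l) (\<lambda>x. x)"

definition player_rew :: "nat \<Rightarrow> ('f \<Rightarrow> nat \<Rightarrow> real measure) \<Rightarrow> nat \<Rightarrow> (nat \<Rightarrow> 'f set) \<Rightarrow> real" where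
  "player_rew m R i a = (\<Sum>f\<in>a i. mean_rew R f (nf m f a))"

definition Val :: "nat \<Rightarrow> ('f \<Rightarrow> nat \<Rightarrow> real measure) \<Rightarrow> nat \<Rightarrow> (nat \<Rightarrow> 'f set pmf) \<Rightarrow> real" where
  "Val m R i \<pi> = measure_pmf.expectation (prod_pol m \<pi>) (player_rew m R i)"

definition best_resp :: "nat \<Rightarrow> (nat \<Rightarrow> 'f set set) \<Rightarrow> ('f \<Rightarrow> nat \<Rightarrow> real measure) \<Rightarrow> nat
    \<Rightarrow> (nat \<Rightarrow> 'f set pmf) \<Rightarrow> real" where
  "best_resp m A R i \<pi> = (SUP p\<in>{p. set_pmf p \<subseteq> A i}. Val m R i (\<pi>(i := p)))"

definition Gap :: "nat \<Rightarrow> (nat \<Rightarrow> 'f set set) \<Rightarrow> ('f \<Rightarrow> nat \<Rightarrow> real measure)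
    \<Rightarrow> (nat \<Rightarrow> 'f set pmf) \<Rightarrow> real" where
  "Gap m A R \<pi> = Max ((\<lambda>i. best_resp m A R i \<pi> - Val m R i \<pi>) ` {..<m})"

definition is_NE :: "nat \<Rightarrow> (nat \<Rightarrow> 'f set set) \<Rightarrow> ('f \<Rightarrow> nat \<Rightarrow> real measure)
    \<Rightarrow> (nat \<Rightarrow> 'f set pmf) \<Rightarrow> bool" where
  "is_NE m A R \<pi> \<longleftrightarrow> is_prod_policy m A \<pi> \<and> Gap m A R \<pi> = 0"

definition dens :: "nat \<Rightarrow> (nat \<Rightarrow> 'f set) pmf \<Rightarrow> 'f \<Rightarrow> nat \<Rightarrow> real" where
  "dens m p f l = measure_pmf.prob p {a. nf m f a = l}"

definition one_unit_dev :: "nat \<Rightarrow> (nat \<Rightarrow> 'f set set) \<Rightarrow> (nat \<Rightarrow> 'f set) pmf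
    \<Rightarrow> (nat \<Rightarrow> 'f set pmf) \<Rightarrow> bool" where
  "one_unit_dev m A \<rho> \<pi>s \<longleftrightarrow>
     (\<forall>i<m. \<forall>p. set_pmf p \<subseteq> A i \<longrightarrow> (\<forall>f l. l \<le> m \<longrightarrow>
        dens m (prod_pol m (\<pi>s(i := p))) f l > 0 \<longrightarrow> dens m \<rho> f l > 0))"

definition C_facility :: "nat \<Rightarrow> (nat \<Rightarrow> 'f set set) \<Rightarrow> (nat \<Rightarrow> 'f set) pmf
    \<Rightarrow> (nat \<Rightarrow> 'f set pmf) \<Rightarrow> real" where
  "C_facility m A \<rho> \<pi>s = Sup {dens m (prod_pol m (\<pi>s(i := p))) f l / dens m \<rho> f l | i p f l.
       i < m \<and> set_pmf p \<subseteq> A i \<and> l \<le> m \<and> dens m \<rho> f l > 0}"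

text \<open>Data. A sample is (joint action, facility rewards); the reward of a facility not used
  in the sample is an (unread) dummy value 0. A dataset is D :: nat => sample, used on {..<n}.\<close>

definition sample_meas :: "nat \<Rightarrow> ('f \<Rightarrow> nat \<Rightarrow> real measure) \<Rightarrow> (nat \<Rightarrow> 'f set) pmf
    \<Rightarrow> ((nat \<Rightarrow> 'f set) \<times> ('f \<Rightarrow> real)) measure" where
  "sample_meas m R \<rho> = measure_pmf \<rho> \<bind> (\<lambda>a.
      distr (PiM UNIV (\<lambda>f. if nf m f a \<ge> 1 then R f (nf m f a) else return borel 0))
            (count_space UNIV \<Otimes>\<^sub>M PiM UNIV (\<lambda>_. borel)) (\<lambda>r. (a, r)))"

definition data_meas :: "nat \<Rightarrow> nat \<Rightarrow> ('f \<Rightarrow> nat \<Rightarrow> real measure) \<Rightarrow> (nat \<Rightarrow> 'f set) pmf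
    \<Rightarrow> (nat \<Rightarrow> (nat \<Rightarrow> 'f set) \<times> ('f \<Rightarrow> real)) measure" where
  "data_meas m n R \<rho> = PiM {..<n} (\<lambda>_. sample_meas m R \<rho>)"

definition Ncnt :: "nat \<Rightarrow> nat \<Rightarrow> (nat \<Rightarrow> (nat \<Rightarrow> 'f set) \<times> ('f \<Rightarrow> real)) \<Rightarrow> 'f \<Rightarrow> nat \<Rightarrow> nat" where
  "Ncnt m n D f l = card {k \<in> {..<n}. nf m f (fst (D k)) = l}"

definition rhat :: "nat \<Rightarrow> nat \<Rightarrow> (nat \<Rightarrow> (nat \<Rightarrow> 'f set) \<times> ('f \<Rightarrow> real)) \<Rightarrow> nat
    \<Rightarrow> (nat \<Rightarrow> 'f set) \<Rightarrow> real" where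
  "rhat m n D i a = (\<Sum>f\<in>a i.
      (\<Sum>k<n. snd (D k) f * (if nf m f (fst (D k)) = nf m f a then 1 else 0))
        / real (max (Ncnt m n D f (nf m f a)) 1))"

definition bonus :: "nat \<Rightarrow> nat \<Rightarrow> real \<Rightarrow> (nat \<Rightarrow> (nat \<Rightarrow> 'f set) \<times> ('f \<Rightarrow> real)) \<Rightarrow> nat
    \<Rightarrow> (nat \<Rightarrow> 'f set) \<Rightarrow> real" where
  "bonus m n \<iota> D i a = (\<Sum>f\<in>a i. sqrt (\<iota> / real (max (Ncnt m n D f (nf m f a)) 1)))"

definition Vup :: "nat \<Rightarrow> nat \<Rightarrow> real \<Rightarrow> (nat \<Rightarrow> (nat \<Rightarrow> 'f set) \<times> ('f \<Rightarrow> real)) \<Rightarrow> nat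
    \<Rightarrow> (nat \<Rightarrow> 'f set pmf) \<Rightarrow> real" where
  "Vup m n \<iota> D i \<pi> = measure_pmf.expectation (prod_pol m \<pi>) (\<lambda>a. rhat m n D i a + bonus m n \<iota> D i a)"

definition Vlo :: "nat \<Rightarrow> nat \<Rightarrow> real \<Rightarrow> (nat \<Rightarrow> (nat \<Rightarrow> 'f set) \<times> ('f \<Rightarrow> real)) \<Rightarrow> nat
    \<Rightarrow> (nat \<Rightarrow> 'f set pmf) \<Rightarrow> real" where
  "Vlo m n \<iota> D i \<pi> = measure_pmf.expectation (prod_pol m \<pi>) (\<lambda>a. rhat m n D i a - bonus m n \<iota> D i a)"

definition Vup_dag :: "nat \<Rightarrow> (nat \<Rightarrow> 'f set set) \<Rightarrow> nat \<Rightarrow> real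
    \<Rightarrow> (nat \<Rightarrow> (nat \<Rightarrow> 'f set) \<times> ('f \<Rightarrow> real)) \<Rightarrow> nat \<Rightarrow> (nat \<Rightarrow> 'f set pmf) \<Rightarrow> real" where
  "Vup_dag m A n \<iota> D i \<pi> = (SUP p\<in>{p. set_pmf p \<subseteq> A i}. Vup m n \<iota> D i (\<pi>(i := p)))"

definition surrogate :: "nat \<Rightarrow> (nat \<Rightarrow> 'f set set) \<Rightarrow> nat \<Rightarrow> real
    \<Rightarrow> (nat \<Rightarrow> (nat \<Rightarrow> 'f set) \<times> ('f \<Rightarrow> real)) \<Rightarrow> (nat \<Rightarrow> 'f set pmf) \<Rightarrow> real" where
  "surrogate m A n \<iota> D \<pi> = Max ((\<lambda>i. Vup_dag m A n \<iota> D i \<pi> - Vlo m n \<iota> D i \<pi>) ` {..<m})"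

definition is_output :: "nat \<Rightarrow> (nat \<Rightarrow> 'f set set) \<Rightarrow> nat \<Rightarrow> real
    \<Rightarrow> (nat \<Rightarrow> (nat \<Rightarrow> 'f set) \<times> ('f \<Rightarrow> real)) \<Rightarrow> (nat \<Rightarrow> 'f set pmf) \<Rightarrow> bool" where
  "is_output m A n \<iota> D \<pi> \<longleftrightarrow> is_prod_policy m A \<pi> \<and>
     (\<forall>\<pi>'. is_prod_policy m A \<pi>' \<longrightarrow> surrogate m A n \<iota> D \<pi> \<le> surrogate m A n \<iota> D \<pi>')"

end

theory Submission
  imports Defs
begin


definition est :: "nat \<Rightarrow> nat \<Rightarrow> (nat \<Rightarrow> (nat \<Rightarrow> 'f set) \<times> ('f \<Rightarrow> real)) \<Rightarrow> 'f \<Rightarrow> nat \<Rightarrow> real" where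
  "est m n D f l = (\<Sum>k<n. snd (D k) f * (if nf m f (fst (D k)) = l then 1 else 0))
        / real (max (Ncnt m n D f l) 1)"

definition gb :: "nat \<Rightarrow> nat \<Rightarrow> real \<Rightarrow> (nat \<Rightarrow> (nat \<Rightarrow> 'f set) \<times> ('f \<Rightarrow> real)) \<Rightarrow> 'f \<Rightarrow> nat \<Rightarrow> real" where
  "gb m n \<iota> D f l = sqrt (\<iota> / real (max (Ncnt m n D f l) 1))"

lemma rhat_est: "rhat m n D i a = (\<Sum>f\<in>a i. est m n D f (nf m f a))"
  by (simp add: rhat_def est_def)

lemma bonus_gb: "bonus m n \<iota> D i a = (\<Sum>f\<in>a i. gb m n \<iota> D f (nf m f a))"
  by (simp add: bonus_def gb_def)

lemma nf_le: "nf m f a \<le> m"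
  unfolding nf_def by (rule order_trans[OF card_mono[of "{..<m}"]]) auto

lemma nf_pos: "i < m \<Longrightarrow> f \<in> a i \<Longrightarrow> 1 \<le> nf m f a"
proof -
  assume "i < m" "f \<in> a i"
  hence "i \<in> {i \<in> {..<m}. f \<in> a i}" by auto
  hence "card {i \<in> {..<m}. f \<in> a i} > 0" by (subst card_gt_0_iff) auto
  thus ?thesis unfolding nf_def by simp
qed

lemma gb_nonneg: "0 \<le> \<iota> \<Longrightarrow> 0 \<le> gb m n \<iota> D f l"
  by (simp add: gb_def)

lemma gb_le: "0 \<le> \<iota> \<Longrightarrow> gb m n \<iota> D f l \<le> sqrt \<iota>"
proof -
  have x: "1 \<le> real (max (Ncnt m n D f l) 1)" by simp
  assume "0 \<le> \<iota>"
  hence "\<iota> / real (max (Ncnt m n D f l) 1) \<le> \<iota>"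
    using divide_left_mono[OF x \<open>0 \<le> \<iota>\<close>] by simp
  thus ?thesis unfolding gb_def by (intro real_sqrt_le_mono)
qed

lemma est_abs_le: "\<bar>est m n D f l\<bar> \<le> (\<Sum>k<n. \<bar>snd (D k) f\<bar>)"
proof -
  have "\<bar>\<Sum>k<n. snd (D k) f * (if nf m f (fst (D k)) = l then 1 else 0)\<bar> \<le> (\<Sum>k<n. \<bar>snd (D k) f\<bar>)"
    by (rule order_trans[OF sum_abs]) (intro sum_mono, auto)
  moreover have "1 \<le> real (max (Ncnt m n D f l) 1)" by simp
  ultimately show ?thesis unfolding est_def abs_divide
    using divide_left_mono[of 1 "real (max (Ncnt m n D f l) 1)"
        "\<bar>\<Sum>k<n. snd (D k) f * (if nf m f (fst (D k)) = l then 1 else 0)\<bar>"]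
    by (smt (verit) abs_ge_zero div_by_1 of_nat_0_less_iff)
qed

lemma int_pmf_bdd: "(\<And>x. \<bar>h x\<bar> \<le> B) \<Longrightarrow> integrable (measure_pmf p) (h :: _ \<Rightarrow> real)"
  by (intro measure_pmf.integrable_const_bound[where B=B]) auto

context
  fixes m n :: nat and A :: "nat \<Rightarrow> ('f::finite) set set" and R :: "'f \<Rightarrow> nat \<Rightarrow> real measure"
    and \<rho> :: "(nat \<Rightarrow> 'f set) pmf" and \<pi>s :: "nat \<Rightarrow> 'f set pmf" and \<iota> :: real
    and D :: "nat \<Rightarrow> (nat \<Rightarrow> 'f set) \<times> ('f \<Rightarrow> real)"
  assumes m1: "m \<ge> 1" and n1: "n \<ge> 1"
    and Afin: "\<forall>i<m. finite (A i) \<and> A i \<noteq> {}"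
    and HR: "\<forall>f l. 1 \<le> l \<and> l \<le> m \<longrightarrow> prob_space (R f l) \<and> sets (R f l) = sets borel
            \<and> (AE x in R f l. -1 \<le> x \<and> x \<le> 1)"
    and iota4: "1 \<le> \<iota>"
    and NE: "is_NE m A R \<pi>s"
    and OUD: "one_unit_dev m A \<rho> \<pi>s"
    and GH: "\<And>f l. 1 \<le> l \<Longrightarrow> l \<le> m \<Longrightarrow> \<bar>est m n D f l - mean_rew R f l\<bar> \<le> gb m n \<iota> D f l"
    and GC: "\<And>f l. 1 \<le> l \<Longrightarrow> l \<le> m \<Longrightarrow> dens m \<rho> f l > 0 \<Longrightarrow>
               real n * dens m \<rho> f l \<le> 4 * \<iota> * real (max (Ncnt m n D f l) 1)"
begin

lemma mu_bound:
  assumes "1 \<le> l" "l \<le> m" shows "\<bar>mean_rew R f l\<bar> \<le> 1"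
proof -
  from HR assms have ps: "prob_space (R f l)" and st: "sets (R f l) = sets borel"
    and ae: "AE x in R f l. -1 \<le> x \<and> x \<le> 1" by auto
  interpret prob_space "R f l" by (rule ps)
  have meas: "(\<lambda>x. x) \<in> borel_measurable (R f l)"
    by (subst measurable_cong_sets[OF st refl]) simp
  have int: "integrable (R f l) (\<lambda>x. x)"
    by (rule integrable_const_bound[where B=1]) (use ae meas in auto)
  have "integral\<^sup>L (R f l) (\<lambda>x. x) \<le> 1"
    by (rule integral_le_const[OF int]) (use ae in auto)
  moreover have "-1 \<le> integral\<^sup>L (R f l) (\<lambda>x. x)"
    by (rule integral_ge_const[OF int]) (use ae in auto)
  ultimately show ?thesis unfolding mean_rew_def by auto
qed

lemma pr_bound: "i < m \<Longrightarrow> \<bar>player_rew m R i a\<bar> \<le> real CARD('f)"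
proof -
  assume i: "i < m"
  have "\<bar>player_rew m R i a\<bar> \<le> (\<Sum>f\<in>a i. \<bar>mean_rew R f (nf m f a)\<bar>)"
    unfolding player_rew_def by (rule sum_abs)
  also have "\<dots> \<le> (\<Sum>f\<in>a i. 1)"
    by (intro sum_mono mu_bound nf_pos[OF i] nf_le)
  also have "\<dots> = real (card (a i))" by simp
  also have "\<dots> \<le> real CARD('f)" by (simp add: card_mono)
  finally show ?thesis .
qed

definition "Mr = (\<Sum>f\<in>UNIV. \<Sum>k<n. \<bar>snd (D k) f\<bar>)"

lemma rhat_bound: "\<bar>rhat m n D i a\<bar> \<le> Mr"
proof -
  have "\<bar>rhat m n D i a\<bar> \<le> (\<Sum>f\<in>a i. \<bar>est m n D f (nf m f a)\<bar>)"
    unfolding rhat_est by (rule sum_abs)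
  also have "\<dots> \<le> (\<Sum>f\<in>a i. \<Sum>k<n. \<bar>snd (D k) f\<bar>)"
    by (intro sum_mono est_abs_le)
  also have "\<dots> \<le> Mr" unfolding Mr_def
    by (intro sum_mono2) (auto intro: sum_nonneg)
  finally show ?thesis .
qed

lemma bonus_bound: "0 \<le> bonus m n \<iota> D i a \<and> bonus m n \<iota> D i a \<le> real CARD('f) * sqrt \<iota>"
proof -
  have i0: "0 \<le> \<iota>" using iota4 by simp
  have "bonus m n \<iota> D i a \<le> (\<Sum>f\<in>a i. sqrt \<iota>)"
    unfolding bonus_gb by (intro sum_mono gb_le i0)
  also have "\<dots> = real (card (a i)) * sqrt \<iota>" by simp
  also have "\<dots> \<le> real CARD('f) * sqrt \<iota>" by (intro mult_right_mono) (use i0 in \<open>simp_all add: card_mono\<close>)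
  finally have "bonus m n \<iota> D i a \<le> real CARD('f) * sqrt \<iota>" .
  moreover have "0 \<le> bonus m n \<iota> D i a" unfolding bonus_gb by (intro sum_nonneg gb_nonneg i0)
  ultimately show ?thesis by simp
qed

lemma pw: assumes i: "i < m"
  shows "\<bar>rhat m n D i a - player_rew m R i a\<bar> \<le> bonus m n \<iota> D i a"
proof -
  have "rhat m n D i a - player_rew m R i a = (\<Sum>f\<in>a i. est m n D f (nf m f a) - mean_rew R f (nf m f a))"
    unfolding rhat_est player_rew_def by (simp add: sum_subtractf)
  also have "\<bar>\<dots>\<bar> \<le> (\<Sum>f\<in>a i. \<bar>est m n D f (nf m f a) - mean_rew R f (nf m f a)\<bar>)"
    by (rule sum_abs)
  also have "\<dots> \<le> bonus m n \<iota> D i a" unfolding bonus_gb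
    by (intro sum_mono GH nf_pos[OF i] nf_le)
  finally show ?thesis .
qed

lemma pw2: assumes i: "i < m"
  shows "player_rew m R i a \<le> rhat m n D i a + bonus m n \<iota> D i a"
    "rhat m n D i a - bonus m n \<iota> D i a \<le> player_rew m R i a"
    "rhat m n D i a + bonus m n \<iota> D i a \<le> player_rew m R i a + 2 * bonus m n \<iota> D i a"
    "player_rew m R i a - 2 * bonus m n \<iota> D i a \<le> rhat m n D i a - bonus m n \<iota> D i a"
  using pw[OF i, of a] by (auto simp: abs_le_iff)

lemma int_pr: "i < m \<Longrightarrow> integrable (measure_pmf p) (player_rew m R i)"
  by (rule int_pmf_bdd[OF pr_bound])
lemma int_rhat: "integrable (measure_pmf p) (rhat m n D i)"
  by (rule int_pmf_bdd[OF rhat_bound])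
lemma int_bonus: "integrable (measure_pmf p) (bonus m n \<iota> D i)"
  by (rule int_pmf_bdd[where B="real CARD('f) * sqrt \<iota>"]) (use bonus_bound in auto)

abbreviation "Eb i \<pi> \<equiv> measure_pmf.expectation (prod_pol m \<pi>) (bonus m n \<iota> D i)"

lemma V_cmp: assumes i: "i < m"
  shows "Val m R i \<pi> \<le> Vup m n \<iota> D i \<pi>" "Vlo m n \<iota> D i \<pi> \<le> Val m R i \<pi>"
    "Vup m n \<iota> D i \<pi> \<le> Val m R i \<pi> + 2 * Eb i \<pi>"
    "Val m R i \<pi> - 2 * Eb i \<pi> \<le> Vlo m n \<iota> D i \<pi>"
proof -
  note I = int_pr[OF i] int_rhat int_bonus
  note P = pw2[OF i]
  show "Val m R i \<pi> \<le> Vup m n \<iota> D i \<pi>" unfolding Val_def Vup_def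
    by (intro integral_mono I Bochner_Integration.integrable_add) (rule P)
  show "Vlo m n \<iota> D i \<pi> \<le> Val m R i \<pi>" unfolding Val_def Vlo_def
    by (intro integral_mono I Bochner_Integration.integrable_diff) (rule P)
  have "Vup m n \<iota> D i \<pi> \<le> measure_pmf.expectation (prod_pol m \<pi>) (\<lambda>a. player_rew m R i a + 2 * bonus m n \<iota> D i a)"
    unfolding Vup_def
    by (intro integral_mono I Bochner_Integration.integrable_add integrable_mult_right)
       (rule P)
  also have "\<dots> = Val m R i \<pi> + 2 * Eb i \<pi>" unfolding Val_def
    by (subst Bochner_Integration.integral_add) (auto intro: I simp: integral_mult_right)
  finally show "Vup m n \<iota> D i \<pi> \<le> Val m R i \<pi> + 2 * Eb i \<pi>" .
  have "Val m R i \<pi> - 2 * Eb i \<pi> = measure_pmf.expectation (prod_pol m \<pi>) (\<lambda>a. player_rew m R i a - 2 * bonus m n \<iota> D i a)"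
    unfolding Val_def
    by (subst Bochner_Integration.integral_diff) (auto intro: I simp: integral_mult_right)
  also have "\<dots> \<le> Vlo m n \<iota> D i \<pi>"
    unfolding Vlo_def
    by (intro integral_mono I Bochner_Integration.integrable_diff integrable_mult_right)
       (rule P)
  finally show "Val m R i \<pi> - 2 * Eb i \<pi> \<le> Vlo m n \<iota> D i \<pi>" .
qed


lemma bonus_le_sum: assumes i: "i < m"
  shows "bonus m n \<iota> D i a \<le> (\<Sum>f\<in>UNIV. \<Sum>l\<in>{1..m}. indicator {a. nf m f a = l} a * gb m n \<iota> D f l)"
proof -
  have i0: "0 \<le> \<iota>" using iota4 by simp
  have eq: "(\<Sum>l\<in>{1..m}. indicator {a. nf m f a = l} a * gb m n \<iota> D f l) =
        (if nf m f a \<in> {1..m} then gb m n \<iota> D f (nf m f a) else 0)" for f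
    by (simp add: indicator_def sum.delta[where a="nf m f a"] if_distrib cong: if_cong)
  have "bonus m n \<iota> D i a = (\<Sum>f\<in>a i. (\<Sum>l\<in>{1..m}. indicator {a. nf m f a = l} a * gb m n \<iota> D f l))"
    unfolding bonus_gb eq
  proof (intro sum.cong refl)
    fix f assume "f \<in> a i"
    hence "nf m f a \<in> {1..m}" using nf_pos[OF i] nf_le by auto
    thus "gb m n \<iota> D f (nf m f a) = (if nf m f a \<in> {1..m} then gb m n \<iota> D f (nf m f a) else 0)" by simp
  qed
  also have "\<dots> \<le> (\<Sum>f\<in>UNIV. \<Sum>l\<in>{1..m}. indicator {a. nf m f a = l} a * gb m n \<iota> D f l)"
    by (intro sum_mono2) (auto intro!: sum_nonneg mult_nonneg_nonneg gb_nonneg i0)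
  finally show ?thesis .
qed

lemma Eb_le: assumes i: "i < m"
  shows "Eb i \<pi> \<le> (\<Sum>f\<in>UNIV. \<Sum>l\<in>{1..m}. dens m (prod_pol m \<pi>) f l * gb m n \<iota> D f l)"
proof -
  have "Eb i \<pi> \<le> measure_pmf.expectation (prod_pol m \<pi>)
      (\<lambda>a. \<Sum>f\<in>UNIV. \<Sum>l\<in>{1..m}. indicator {a. nf m f a = l} a * gb m n \<iota> D f l)"
    by (intro integral_mono int_bonus bonus_le_sum[OF i] Bochner_Integration.integrable_sum
        integrable_mult_left) (auto intro: int_pmf_bdd[where B=1])
  also have "\<dots> = (\<Sum>f\<in>UNIV. \<Sum>l\<in>{1..m}. dens m (prod_pol m \<pi>) f l * gb m n \<iota> D f l)"
    unfolding dens_def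
  proof -
    let ?h = "\<lambda>f l a. indicator {a. nf m f a = l} a * gb m n \<iota> D f l"
    have I: "integrable (measure_pmf (prod_pol m \<pi>)) (?h f l)" for f l
      by (rule int_pmf_bdd[where B="\<bar>gb m n \<iota> D f l\<bar>"]) (simp add: indicator_def abs_mult)
    have I2: "integrable (measure_pmf (prod_pol m \<pi>)) (\<lambda>a. \<Sum>l\<in>{1..m}. ?h f l a)" for f
      by (intro Bochner_Integration.integrable_sum I)
    have "measure_pmf.expectation (prod_pol m \<pi>) (\<lambda>a. \<Sum>f\<in>UNIV. \<Sum>l\<in>{1..m}. ?h f l a)
        = (\<Sum>f\<in>UNIV. measure_pmf.expectation (prod_pol m \<pi>) (\<lambda>a. \<Sum>l\<in>{1..m}. ?h f l a))"
      by (rule Bochner_Integration.integral_sum[OF I2])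
    also have "\<dots> = (\<Sum>f\<in>UNIV. \<Sum>l\<in>{1..m}. measure_pmf.expectation (prod_pol m \<pi>) (?h f l))"
      by (intro sum.cong refl Bochner_Integration.integral_sum I)
    also have "\<dots> = (\<Sum>f\<in>UNIV. \<Sum>l\<in>{1..m}. measure_pmf.prob (prod_pol m \<pi>) {a. nf m f a = l} * gb m n \<iota> D f l)"
      by (simp add: integral_mult_left_zero)
    finally show "measure_pmf.expectation (prod_pol m \<pi>) (\<lambda>a. \<Sum>f\<in>UNIV. \<Sum>l\<in>{1..m}. ?h f l a)
        = (\<Sum>f\<in>UNIV. \<Sum>l\<in>{1..m}. measure_pmf.prob (prod_pol m \<pi>) {a. nf m f a = l} * gb m n \<iota> D f l)" .
  qed
  finally show ?thesis .
qed


abbreviation "Cf \<equiv> C_facility m A \<rho> \<pi>s"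
abbreviation "Sf \<equiv> {dens m (prod_pol m (\<pi>s(i := p))) f l / dens m \<rho> f l | i p f l.
       i < m \<and> set_pmf p \<subseteq> A i \<and> l \<le> m \<and> dens m \<rho> f l > 0}"

lemma dens_nonneg: "0 \<le> dens m P f l" by (simp add: dens_def)
lemma dens_le1: "dens m P f l \<le> 1" by (simp add: dens_def)

lemma Sf_bdd: "bdd_above Sf"
proof -
  define Bd where "Bd = (\<Sum>f\<in>UNIV. \<Sum>l\<in>{..m}. (if dens m \<rho> f l > 0 then 1 / dens m \<rho> f l else 0))"
  have "x \<le> Bd" if "x \<in> Sf" for x
  proof -
    from that obtain i p f l where x: "x = dens m (prod_pol m (\<pi>s(i := p))) f l / dens m \<rho> f l"
      and l: "l \<le> m" and d: "dens m \<rho> f l > 0" by blast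
    have "x \<le> 1 / dens m \<rho> f l" unfolding x using d by (intro divide_right_mono dens_le1) auto
    also have "\<dots> = (if dens m \<rho> f l > 0 then 1 / dens m \<rho> f l else 0)" using d by simp
    also have "\<dots> \<le> (\<Sum>l\<in>{..m}. (if dens m \<rho> f l > 0 then 1 / dens m \<rho> f l else 0))"
      by (rule member_le_sum) (use l in auto)
    also have "\<dots> \<le> Bd" unfolding Bd_def
      by (rule member_le_sum) (auto intro!: sum_nonneg)
    finally show ?thesis .
  qed
  thus ?thesis by (rule bdd_aboveI)
qed

lemma ratio_le_Cf: "i < m \<Longrightarrow> set_pmf p \<subseteq> A i \<Longrightarrow> l \<le> m \<Longrightarrow> dens m \<rho> f l > 0 \<Longrightarrow>
   dens m (prod_pol m (\<pi>s(i := p))) f l / dens m \<rho> f l \<le> Cf"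
  unfolding C_facility_def by (rule cSup_upper[OF _ Sf_bdd]) blast

lemma NE_pol: "is_prod_policy m A \<pi>s" using NE by (simp add: is_NE_def)

lemma Cf_nonneg: "0 \<le> Cf"
proof -
  obtain a0 where a0: "a0 \<in> set_pmf \<rho>" using set_pmf_not_empty[of \<rho>] by blast
  define f0 :: 'f where "f0 = undefined"
  define l0 where "l0 = nf m f0 a0"
  have d: "dens m \<rho> f0 l0 > 0" unfolding dens_def l0_def by (rule measure_pmf_posI[OF a0]) simp
  have "0 \<le> dens m (prod_pol m (\<pi>s(0 := \<pi>s 0))) f0 l0 / dens m \<rho> f0 l0"
    by (intro divide_nonneg_nonneg dens_nonneg)
  also have "\<dots> \<le> Cf"
    using NE_pol m1 d by (intro ratio_le_Cf) (auto simp: is_prod_policy_def l0_def nf_le)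
  finally show ?thesis .
qed

lemma aux_ineq:
  fixes d t M N :: real
  assumes "0 < d" "0 < t" "1 \<le> M" "1 \<le> N" "N * d \<le> 4 * t * M"
  shows "d * sqrt (t / M) \<le> 2 * t * sqrt d / sqrt N"
proof (rule power2_le_imp_le)
  show "0 \<le> 2 * t * sqrt d / sqrt N" using assms by simp
  have l: "(d * sqrt (t / M))\<^sup>2 = d^2 * t / M" using assms by (simp add: power_mult_distrib)
  have r: "(2 * t * sqrt d / sqrt N)\<^sup>2 = 4 * t^2 * d / N" using assms
    by (simp add: power_mult_distrib power_divide)
  have "d^2 * t * N \<le> 4 * t^2 * d * M"
  proof -
    have "d^2 * t * N = (d * t) * (N * d)" by (simp add: power2_eq_square)
    also have "\<dots> \<le> (d * t) * (4 * t * M)" using assms by (intro mult_left_mono) auto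
    also have "\<dots> = 4 * t^2 * d * M" by (simp add: power2_eq_square)
    finally show ?thesis .
  qed
  thus "(d * sqrt (t / M))\<^sup>2 \<le> (2 * t * sqrt d / sqrt N)\<^sup>2" unfolding l r using assms
    by (simp add: divide_le_eq le_divide_eq mult_ac)
qed

lemma term_bound:
  assumes j: "j < m" and p: "set_pmf p \<subseteq> A j" and l: "1 \<le> l" "l \<le> m"
  shows "dens m (prod_pol m (\<pi>s(j := p))) f l * gb m n \<iota> D f l \<le> 2 * Cf * \<iota> * sqrt (dens m \<rho> f l) / sqrt n"
proof (cases "dens m \<rho> f l > 0")
  case False
  hence "\<not> dens m (prod_pol m (\<pi>s(j := p))) f l > 0"
    using OUD j p l unfolding one_unit_dev_def by blast
  hence "dens m (prod_pol m (\<pi>s(j := p))) f l = 0" using dens_nonneg[of "prod_pol m (\<pi>s(j := p))" f l] by simp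
  moreover have "dens m \<rho> f l = 0" using False dens_nonneg[of \<rho> f l] by simp
  ultimately show ?thesis by simp
next
  case True
  define d where "d = dens m \<rho> f l"
  define M where "M = real (max (Ncnt m n D f l) 1)"
  have d: "0 < d" using True by (simp add: d_def)
  have gbM: "gb m n \<iota> D f l = sqrt (\<iota> / M)" by (simp add: gb_def M_def)
  have "dens m (prod_pol m (\<pi>s(j := p))) f l / d \<le> Cf"
    unfolding d_def by (rule ratio_le_Cf[OF j p l(2) True])
  hence dp: "dens m (prod_pol m (\<pi>s(j := p))) f l \<le> Cf * d" using d by (simp add: divide_le_eq)
  have "dens m (prod_pol m (\<pi>s(j := p))) f l * gb m n \<iota> D f l \<le> (Cf * d) * sqrt (\<iota> / M)"
    unfolding gbM using iota4 by (intro mult_right_mono dp) (simp add: M_def)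
  also have "\<dots> = Cf * (d * sqrt (\<iota> / M))" by simp
  also have "\<dots> \<le> Cf * (2 * \<iota> * sqrt d / sqrt n)"
    using GC[OF l True] iota4 n1 d
    by (intro mult_left_mono Cf_nonneg aux_ineq) (auto simp: d_def M_def)
  finally show ?thesis by (simp add: d_def mult_ac)
qed

lemma dens_sum_le1: "(\<Sum>l\<in>{1..m}. dens m P f l) \<le> 1"
proof -
  have "(\<Sum>l\<in>{1..m}. dens m P f l) = measure_pmf.prob P (\<Union>l\<in>{1..m}. {a. nf m f a = l})"
    unfolding dens_def
    by (rule measure_pmf.finite_measure_finite_Union[symmetric]) (auto simp: disjoint_family_on_def)
  also have "\<dots> \<le> 1" by simp
  finally show ?thesis .
qed

lemma sqrt_sum: "(\<Sum>l\<in>{1..m}. sqrt (dens m P f l)) \<le> sqrt (real m + 1)"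
proof (rule real_le_rsqrt)
  have "(\<Sum>l\<in>{1..m}. sqrt (dens m P f l) * 1)\<^sup>2 \<le> (\<Sum>l\<in>{1..m}. (sqrt (dens m P f l))\<^sup>2) * (\<Sum>l\<in>{1..m}. 1\<^sup>2)"
    by (rule Cauchy_Schwarz_ineq_sum)
  also have "\<dots> = (\<Sum>l\<in>{1..m}. dens m P f l) * real m" by (simp add: dens_nonneg)
  also have "\<dots> \<le> 1 * real m" by (intro mult_right_mono dens_sum_le1) simp
  finally show "(\<Sum>l\<in>{1..m}. sqrt (dens m P f l))\<^sup>2 \<le> real m + 1" by simp
qed

definition "Kb = 2 * sqrt (real m + 1) * Cf * \<iota> * real CARD('f) / sqrt (real n)"

lemma Eb_dev: assumes j: "j < m" and p: "set_pmf p \<subseteq> A j"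
  shows "Eb j (\<pi>s(j := p)) \<le> Kb"
proof -
  have "Eb j (\<pi>s(j := p)) \<le> (\<Sum>f\<in>UNIV. \<Sum>l\<in>{1..m}. dens m (prod_pol m (\<pi>s(j := p))) f l * gb m n \<iota> D f l)"
    by (rule Eb_le[OF j])
  also have "\<dots> \<le> (\<Sum>f\<in>(UNIV::'f set). \<Sum>l\<in>{1..m}. 2 * Cf * \<iota> * sqrt (dens m \<rho> f l) / sqrt n)"
    by (intro sum_mono term_bound[OF j p]) auto
  also have "\<dots> = (\<Sum>f\<in>(UNIV::'f set). (2 * Cf * \<iota> / sqrt n) * (\<Sum>l\<in>{1..m}. sqrt (dens m \<rho> f l)))"
    by (simp add: sum_distrib_left)
  also have "\<dots> \<le> (\<Sum>f\<in>(UNIV::'f set). (2 * Cf * \<iota> / sqrt n) * sqrt (real m + 1))"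
    using Cf_nonneg iota4 by (intro sum_mono mult_left_mono sqrt_sum) auto
  also have "\<dots> = Kb" by (simp add: Kb_def)
  finally show ?thesis .
qed


lemma Pset_ne: "i < m \<Longrightarrow> {p. set_pmf p \<subseteq> A i} \<noteq> {}"
proof -
  assume "i < m"
  then obtain x where "x \<in> A i" using Afin by blast
  hence "return_pmf x \<in> {p. set_pmf p \<subseteq> A i}" by simp
  thus ?thesis by blast
qed

lemma Val_le: "i < m \<Longrightarrow> Val m R i \<pi> \<le> real CARD('f)"
  unfolding Val_def
  by (rule measure_pmf.integral_le_const[OF int_pr]) (use pr_bound in \<open>auto simp: abs_le_iff\<close>)

lemma Vup_le: "Vup m n \<iota> D i \<pi> \<le> Mr + real CARD('f) * sqrt \<iota>"
  unfolding Vup_def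
  by (rule measure_pmf.integral_le_const[OF Bochner_Integration.integrable_add[OF int_rhat int_bonus]])
     (use rhat_bound bonus_bound in \<open>auto simp: abs_le_iff intro!: AE_I2 add_mono\<close>)

lemma bdd_Val: "i < m \<Longrightarrow> bdd_above ((\<lambda>p. Val m R i (\<pi>(i := p))) ` X)"
  by (rule bdd_aboveI[where M="real CARD('f)"]) (auto intro: Val_le)

lemma bdd_Vup: "bdd_above ((\<lambda>p. Vup m n \<iota> D i (\<pi>(i := p))) ` X)"
  by (rule bdd_aboveI[where M="Mr + real CARD('f) * sqrt \<iota>"]) (auto intro: Vup_le)

lemma br_NE: assumes j: "j < m" shows "best_resp m A R j \<pi>s \<le> Val m R j \<pi>s"
proof -
  have "best_resp m A R j \<pi>s - Val m R j \<pi>s \<le> Gap m A R \<pi>s"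
    unfolding Gap_def by (rule Max_ge) (use j in auto)
  thus ?thesis using NE by (simp add: is_NE_def)
qed

lemma Vupdag_NE: assumes j: "j < m" shows "Vup_dag m A n \<iota> D j \<pi>s \<le> Val m R j \<pi>s + 2 * Kb"
  unfolding Vup_dag_def
proof (rule cSUP_least[OF Pset_ne[OF j]])
  fix p assume p: "p \<in> {p. set_pmf p \<subseteq> A j}"
  have "Vup m n \<iota> D j (\<pi>s(j := p)) \<le> Val m R j (\<pi>s(j := p)) + 2 * Eb j (\<pi>s(j := p))"
    by (rule V_cmp(3)[OF j])
  also have "\<dots> \<le> best_resp m A R j \<pi>s + 2 * Kb"
  proof (intro add_mono mult_left_mono)
    show "Val m R j (\<pi>s(j := p)) \<le> best_resp m A R j \<pi>s"
      unfolding best_resp_def by (rule cSUP_upper[OF p bdd_Val[OF j]])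
    show "Eb j (\<pi>s(j := p)) \<le> Kb" using p by (intro Eb_dev[OF j]) auto
  qed simp
  also have "\<dots> \<le> Val m R j \<pi>s + 2 * Kb" using br_NE[OF j] by simp
  finally show "Vup m n \<iota> D j (\<pi>s(j := p)) \<le> Val m R j \<pi>s + 2 * Kb" .
qed

lemma Vlo_NE: assumes j: "j < m" shows "Val m R j \<pi>s - 2 * Kb \<le> Vlo m n \<iota> D j \<pi>s"
proof -
  have "Eb j (\<pi>s(j := \<pi>s j)) \<le> Kb"
    using NE_pol j by (intro Eb_dev[OF j]) (auto simp: is_prod_policy_def)
  hence "Eb j \<pi>s \<le> Kb" by simp
  thus ?thesis using V_cmp(4)[OF j, of \<pi>s] by simp
qed

lemma surr_NE: "surrogate m A n \<iota> D \<pi>s \<le> 4 * Kb"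
  unfolding surrogate_def
proof (subst Max_le_iff, simp, use m1 in \<open>simp add: lessThan_empty_iff\<close>, safe)
  fix j assume j: "j < m"
  show "Vup_dag m A n \<iota> D j \<pi>s - Vlo m n \<iota> D j \<pi>s \<le> 4 * Kb"
    using Vupdag_NE[OF j] Vlo_NE[OF j] by simp
qed

lemma gap_det: assumes out: "is_output m A n \<iota> D \<pi>o"
  shows "Gap m A R \<pi>o \<le> 8 * sqrt (real m + 1) * Cf * \<iota> * real CARD('f) / sqrt (real n)"
proof -
  have "Gap m A R \<pi>o \<le> 4 * Kb"
    unfolding Gap_def
  proof (subst Max_le_iff, simp, use m1 in \<open>simp add: lessThan_empty_iff\<close>, safe)
    fix i assume i: "i < m"
    have "best_resp m A R i \<pi>o \<le> Vup_dag m A n \<iota> D i \<pi>o"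
      unfolding best_resp_def Vup_dag_def
      by (rule cSUP_mono[OF Pset_ne[OF i] bdd_Vup]) (use V_cmp(1)[OF i] in blast)
    moreover have "Vlo m n \<iota> D i \<pi>o \<le> Val m R i \<pi>o" by (rule V_cmp(2)[OF i])
    moreover have "Vup_dag m A n \<iota> D i \<pi>o - Vlo m n \<iota> D i \<pi>o \<le> surrogate m A n \<iota> D \<pi>o"
      unfolding surrogate_def by (rule Max_ge) (use i in auto)
    moreover have "surrogate m A n \<iota> D \<pi>o \<le> surrogate m A n \<iota> D \<pi>s"
      using out NE_pol unfolding is_output_def by blast
    ultimately show "best_resp m A R i \<pi>o - Val m R i \<pi>o \<le> 4 * Kb" using surr_NE by linarith
  qed
  thus ?thesis by (simp add: Kb_def)
qed

end




definition Om :: "((nat \<Rightarrow> 'f set) \<times> ('f \<Rightarrow> real)) measure" where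
  "Om = count_space UNIV \<Otimes>\<^sub>M PiM UNIV (\<lambda>_. borel)"

definition Qm :: "nat \<Rightarrow> ('f \<Rightarrow> nat \<Rightarrow> real measure) \<Rightarrow> (nat \<Rightarrow> 'f set) \<Rightarrow> ('f \<Rightarrow> real) measure" where
  "Qm m R a = PiM UNIV (\<lambda>f. if nf m f a \<ge> 1 then R f (nf m f a) else return borel 0)"

definition kap :: "nat \<Rightarrow> ('f \<Rightarrow> nat \<Rightarrow> real measure) \<Rightarrow> (nat \<Rightarrow> 'f set) \<Rightarrow> ((nat \<Rightarrow> 'f set) \<times> ('f \<Rightarrow> real)) measure" where
  "kap m R a = distr (Qm m R a) Om (\<lambda>r. (a, r))"

lemma sample_kap: "sample_meas m R \<rho> = measure_pmf \<rho> \<bind> kap m R"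
  unfolding sample_meas_def kap_def Qm_def Om_def ..

context
  fixes m n :: nat and R :: "'f \<Rightarrow> nat \<Rightarrow> real measure"
  assumes HR: "\<forall>f l. 1 \<le> l \<and> l \<le> m \<longrightarrow> prob_space (R f l) \<and> sets (R f l) = sets borel
            \<and> (AE x in R f l. -1 \<le> x \<and> x \<le> 1)"
begin

lemma comp_ps: "prob_space (if nf m f a \<ge> 1 then R f (nf m f a) else return borel 0)"
  using HR nf_le[of m f a] by (auto intro: prob_space_return)

lemma comp_sets: "sets (if nf m f a \<ge> 1 then R f (nf m f a) else return borel 0) = sets borel"
  using HR nf_le[of m f a] by auto

lemma Qm_ps: "prob_space (Qm m R a)"
  unfolding Qm_def by (intro prob_space_PiM comp_ps)

lemma Qm_sets: "sets (Qm m R a) = sets (PiM UNIV (\<lambda>_::'f. borel))"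
  unfolding Qm_def by (intro sets_PiM_cong comp_sets refl)

lemma kap_meas_pair: "(\<lambda>r. (a, r)) \<in> measurable (Qm m R a) Om"
  unfolding Om_def by (subst measurable_cong_sets[OF Qm_sets refl]) measurable

lemma kap_ps: "prob_space (kap m R a)"
  unfolding kap_def by (intro prob_space.prob_space_distr Qm_ps kap_meas_pair)

lemma kap_sets: "sets (kap m R a) = sets Om"
  unfolding kap_def by simp

lemma kap_subprob: "kap m R a \<in> space (subprob_algebra Om)"
  using kap_ps kap_sets by (auto simp: space_subprob_algebra prob_space_imp_subprob_space)

lemma kap_meas: "kap m R \<in> measurable (measure_pmf \<rho>) (subprob_algebra Om)"
  using kap_subprob by simp

lemma sample_ps: "prob_space (sample_meas m R \<rho>)"
  unfolding sample_kap
  by (rule prob_space.prob_space_bind[OF measure_pmf.prob_space_axioms _ kap_meas])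
     (simp add: kap_ps)

lemma sample_sets: "sets (sample_meas m R \<rho>) = sets Om"
  unfolding sample_kap by (rule sets_bind) (auto simp: kap_sets)

abbreviation "PA as \<equiv> PiM {..<n} (\<lambda>k. kap m R (as k))"

lemma PA_ps: "prob_space (PA as)"
  by (intro prob_space_PiM kap_ps)

lemma PA_sets: "sets (PA as) = sets (PiM {..<n} (\<lambda>_. Om))"
  by (intro sets_PiM_cong kap_sets refl)

lemma PA_meas: "PA \<in> measurable (measure_pmf P) (subprob_algebra (PiM {..<n} (\<lambda>_. Om)))"
  using PA_ps PA_sets by (auto simp: space_subprob_algebra prob_space_imp_subprob_space)

abbreviation "PP \<rho> \<equiv> Pi_pmf {..<n} undefined (\<lambda>_. \<rho>)"

lemma data_bind: "data_meas m n R \<rho> = measure_pmf (PP \<rho>) \<bind> PA"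
proof -
  interpret ps: product_prob_space "\<lambda>_. sample_meas m R \<rho>" "{..<n}"
    by (intro product_prob_spaceI sample_ps)
  have "measure_pmf (PP \<rho>) \<bind> PA = PiM {..<n} (\<lambda>_. sample_meas m R \<rho>)"
  proof (rule ps.PiM_eqI)
    show "finite {..<n}" by simp
    show "sets (measure_pmf (PP \<rho>) \<bind> PA) = sets (PiM {..<n} (\<lambda>_. sample_meas m R \<rho>))"
      by (subst sets_bind[where N="PiM {..<n} (\<lambda>_. Om)"]) (auto simp: PA_sets sample_sets intro!: sets_PiM_cong)
    fix X assume X: "\<And>i. i \<in> {..<n} \<Longrightarrow> X i \<in> sets (sample_meas m R \<rho>)"
    have XO: "X i \<in> sets Om" if "i < n" for i using X[of i] that sample_sets by simp
    have "emeasure (measure_pmf (PP \<rho>) \<bind> PA) (Pi\<^sub>E {..<n} X) = (\<integral>\<^sup>+as. emeasure (PA as) (Pi\<^sub>E {..<n} X) \<partial>PP \<rho>)"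
      by (rule emeasure_bind[OF _ PA_meas]) (auto intro!: sets_PiM_I_finite XO)
    also have "\<dots> = (\<integral>\<^sup>+as. (\<Prod>k\<in>{..<n}. emeasure (kap m R (as k)) (X k)) \<partial>PP \<rho>)"
    proof (intro nn_integral_cong)
      fix as :: "nat \<Rightarrow> nat \<Rightarrow> 'f set"
      interpret pk: product_prob_space "\<lambda>k. kap m R (as k)" "{..<n}"
        by (intro product_prob_spaceI kap_ps)
      show "emeasure (PA as) (Pi\<^sub>E {..<n} X) = (\<Prod>k\<in>{..<n}. emeasure (kap m R (as k)) (X k))"
        by (rule pk.emeasure_PiM) (auto simp: kap_sets XO)
    qed
    also have "\<dots> = (\<Prod>k\<in>{..<n}. \<integral>\<^sup>+a. emeasure (kap m R a) (X k) \<partial>\<rho>)"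
      by (rule nn_integral_prod_Pi_pmf) simp
    also have "\<dots> = (\<Prod>k\<in>{..<n}. emeasure (sample_meas m R \<rho>) (X k))"
      unfolding sample_kap
      by (intro prod.cong refl emeasure_bind[symmetric, OF _ kap_meas]) (auto intro: XO)
    finally show "emeasure (measure_pmf (PP \<rho>) \<bind> PA) (Pi\<^sub>E {..<n} X) = (\<Prod>k\<in>{..<n}. emeasure (sample_meas m R \<rho>) (X k))" .
  qed
  thus ?thesis unfolding data_meas_def by simp
qed


lemma space_PA: "space (PA as) = space (PiM {..<n} (\<lambda>_. Om))"
  by (rule sets_eq_imp_space_eq[OF PA_sets])

lemma AE_kap_fst: "AE x in kap m R a. fst x = a"
proof -
  have "{x \<in> space Om. fst x = a} \<in> sets Om" unfolding Om_def by measurable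
  hence "(AE x in kap m R a. fst x = a) \<longleftrightarrow> (AE r in Qm m R a. fst (a, r) = a)"
    unfolding kap_def by (intro AE_distr_iff kap_meas_pair)
  thus ?thesis by simp
qed

lemma AE_PA_fst: "AE D in PA as. \<forall>k\<in>{..<n}. fst (D k) = as k"
proof (rule AE_finite_allI, simp)
  fix k assume "k \<in> {..<n}"
  thus "AE D in PA as. fst (D k) = as k"
    by (intro AE_PiM_component[where P="\<lambda>x. fst x = as k"] kap_ps AE_kap_fst)
qed

lemma AE_kap_bound: assumes "nf m f a = l" "1 \<le> l"
  shows "AE x in kap m R a. snd x f \<in> {-1..1}"
proof -
  have l: "l \<le> m" using assms nf_le[of m f a] by simp
  have "{x \<in> space Om. snd x f \<in> {-1..1}} \<in> sets Om" unfolding Om_def by measurable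
  hence eq: "(AE x in kap m R a. snd x f \<in> {-1..1}) \<longleftrightarrow> (AE r in Qm m R a. snd (a, r) f \<in> {-1..1})"
    unfolding kap_def by (intro AE_distr_iff kap_meas_pair)
  have "AE x in R f l. -1 \<le> x \<and> x \<le> 1" using HR assms l by auto
  moreover have eqR: "(if nf m f a \<ge> 1 then R f (nf m f a) else return borel 0) = R f l"
    using assms by simp
  ultimately have "AE x in (if nf m f a \<ge> 1 then R f (nf m f a) else return borel 0). x \<in> {-1..1}"
    unfolding eqR by (auto elim: eventually_mono)
  hence "AE r in Qm m R a. r f \<in> {-1..1}"
    unfolding Qm_def by (intro AE_PiM_component[where P="\<lambda>x. x \<in> {-1..1}"] comp_ps) auto
  thus ?thesis using eq by simp
qed

lemma indep_comp: assumes n: "n \<ge> 1"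
  shows "prob_space.indep_vars (PA as) (\<lambda>_. Om) (\<lambda>k D. D k) {..<n}"
proof -
  interpret P: prob_space "PA as" by (rule PA_ps)
  have ne: "{..<n} \<noteq> {}" using n by (auto simp: lessThan_empty_iff)
  show ?thesis
  proof (subst P.indep_vars_iff_distr_eq_PiM'[OF ne])
    show "(\<lambda>D. D k) \<in> measurable (PA as) Om" if "k \<in> {..<n}" for k
      using measurable_component_singleton[OF that, of "\<lambda>k. kap m R (as k)"]
      by (simp add: measurable_cong_sets[OF refl kap_sets])
    have "distr (PA as) (Pi\<^sub>M {..<n} (\<lambda>_. Om)) (\<lambda>x. restrict x {..<n}) = distr (PA as) (PA as) (\<lambda>x. x)"
      by (intro distr_cong refl) (auto simp: PA_sets space_PiM)
    also have "\<dots> = PA as" by simp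
    also have "\<dots> = Pi\<^sub>M {..<n} (\<lambda>k. distr (PA as) Om (\<lambda>D. D k))"
    proof (intro PiM_cong refl)
      fix k assume k: "k \<in> {..<n}"
      have "distr (PA as) Om (\<lambda>D. D k) = distr (PA as) (kap m R (as k)) (\<lambda>D. D k)"
        by (intro distr_cong refl) (simp add: kap_sets)
      also have "\<dots> = kap m R (as k)"
        by (rule distr_PiM_component[OF kap_ps k])
      finally show "kap m R (as k) = distr (PA as) Om (\<lambda>D. D k)" by simp
    qed
    finally show "distr (PA as) (Pi\<^sub>M {..<n} (\<lambda>_. Om)) (\<lambda>x. restrict x {..<n}) =
       Pi\<^sub>M {..<n} (\<lambda>k. distr (PA as) Om (\<lambda>D. D k))" .
  qed
qed

lemma exp_comp: assumes k: "k < n" and "nf m f (as k) = l" "1 \<le> l"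
  shows "integral\<^sup>L (PA as) (\<lambda>D. snd (D k) f) = mean_rew R f l"
proof -
  have l: "l \<le> m" using assms nf_le[of m f "as k"] by simp
  have mb: "(\<lambda>x. snd x f) \<in> borel_measurable (kap m R a)" for a
    by (subst measurable_cong_sets[OF kap_sets refl]) (unfold Om_def, measurable)
  have mO: "(\<lambda>x. snd x f) \<in> borel_measurable Om" unfolding Om_def by measurable
  have "integral\<^sup>L (PA as) (\<lambda>D. snd (D k) f) = integral\<^sup>L (distr (PA as) (kap m R (as k)) (\<lambda>D. D k)) (\<lambda>x. snd x f)"
    by (rule integral_distr[symmetric]) (use k mb in auto)
  also have "\<dots> = integral\<^sup>L (kap m R (as k)) (\<lambda>x. snd x f)"
    using k by (subst distr_PiM_component[OF kap_ps]) auto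
  also have "\<dots> = integral\<^sup>L (Qm m R (as k)) (\<lambda>r. r f)"
    unfolding kap_def by (subst integral_distr[OF kap_meas_pair mO]) simp
  also have "\<dots> = integral\<^sup>L (distr (Qm m R (as k)) (if nf m f (as k) \<ge> 1 then R f (nf m f (as k)) else return borel 0) (\<lambda>r. r f)) (\<lambda>x. x)"
    unfolding Qm_def
    by (rule integral_distr[symmetric], rule measurable_component_singleton, simp,
        subst measurable_cong_sets[OF comp_sets refl], simp)
  also have "\<dots> = integral\<^sup>L (R f l) (\<lambda>x. x)"
    unfolding Qm_def by (subst distr_PiM_component, rule comp_ps, simp) (use assms in simp)
  finally show ?thesis unfolding mean_rew_def .
qed


lemma mu_bnd: assumes "1 \<le> l" "l \<le> m" shows "\<bar>mean_rew R f l\<bar> \<le> 1"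
proof -
  from HR assms have ps: "prob_space (R f l)" and st: "sets (R f l) = sets borel"
    and ae: "AE x in R f l. -1 \<le> x \<and> x \<le> 1" by auto
  interpret prob_space "R f l" by (rule ps)
  have meas: "(\<lambda>x. x) \<in> borel_measurable (R f l)"
    by (subst measurable_cong_sets[OF st refl]) simp
  have int: "integrable (R f l) (\<lambda>x. x)"
    by (rule integrable_const_bound[where B=1]) (use ae meas in auto)
  have "integral\<^sup>L (R f l) (\<lambda>x. x) \<le> 1"
    by (rule integral_le_const[OF int]) (use ae in auto)
  moreover have "-1 \<le> integral\<^sup>L (R f l) (\<lambda>x. x)"
    by (rule integral_ge_const[OF int]) (use ae in auto)
  ultimately show ?thesis unfolding mean_rew_def by auto
qed

lemma meas_fstk: "k \<in> {..<n} \<Longrightarrow> (\<lambda>D. fst (D k)) \<in> measurable (PiM {..<n} (\<lambda>_. Om)) (count_space UNIV)"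
  unfolding Om_def by measurable

lemma pred_nfk: "k \<in> {..<n} \<Longrightarrow> (\<lambda>D. h (fst (D k))) \<in> measurable (PiM {..<n} (\<lambda>_. Om)) (count_space UNIV)"
  by (rule measurable_compose[OF meas_fstk]) auto

lemma meas_ind[measurable]: "k \<in> {..<n} \<Longrightarrow>
   (\<lambda>D. if nf m f (fst (D k)) = l then (1::real) else 0) \<in> borel_measurable (PiM {..<n} (\<lambda>_. Om))"
  using measurable_compose[OF meas_fstk, of k "\<lambda>a. if nf m f a = l then 1 else (0::real)" borel] by simp

lemma meas_sndk[measurable]: "k \<in> {..<n} \<Longrightarrow> (\<lambda>D. snd (D k) f) \<in> borel_measurable (PiM {..<n} (\<lambda>_. Om))"
  unfolding Om_def by measurable

lemma Ncnt_sum: "real (Ncnt m n D f l) = (\<Sum>k<n. if nf m f (fst (D k)) = l then 1 else 0)"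
  unfolding Ncnt_def by (simp add: sum.inter_filter[symmetric])

lemma meas_Ncnt[measurable]: "(\<lambda>D. real (Ncnt m n D f l)) \<in> borel_measurable (PiM {..<n} (\<lambda>_. Om))"
  unfolding Ncnt_sum by (intro borel_measurable_sum meas_ind)

lemma meas_maxN[measurable]: "(\<lambda>D. real (max (Ncnt m n D f l) 1)) \<in> borel_measurable (PiM {..<n} (\<lambda>_. Om))"
  unfolding of_nat_max by (intro borel_measurable_max meas_Ncnt) simp

lemma meas_est[measurable]: "(\<lambda>D. est m n D f l) \<in> borel_measurable (PiM {..<n} (\<lambda>_. Om))"
  unfolding est_def
  by (intro borel_measurable_divide borel_measurable_sum borel_measurable_times meas_sndk meas_ind meas_maxN)

lemma meas_gb[measurable]: "(\<lambda>D. gb m n \<iota> D f l) \<in> borel_measurable (PiM {..<n} (\<lambda>_. Om))"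
  unfolding gb_def by measurable

lemma sets_test: "{D \<in> space (PiM {..<n} (\<lambda>_. Om)). gb m n \<iota> D f l < \<bar>est m n D f l - c\<bar>} \<in> sets (PiM {..<n} (\<lambda>_. Om))"
  by measurable


lemma aux_hoef:
  fixes N S mu t :: real
  assumes N: "N > 0" and t: "t \<ge> 0" and h: "sqrt (t / N) < \<bar>S / N - mu\<bar>"
  shows "sqrt (t * N) \<le> \<bar>S - N * mu\<bar>"
proof -
  have "S - N * mu = N * (S / N - mu)" using N by (simp add: field_simps)
  hence e: "\<bar>S - N * mu\<bar> = N * \<bar>S / N - mu\<bar>" using N by (simp add: abs_mult)
  have "sqrt (t * N) = N * sqrt (t / N)"
  proof -
    have "N * sqrt (t / N) = sqrt (N^2) * sqrt (t / N)" using N by simp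
    also have "\<dots> = sqrt (N^2 * (t / N))" by (rule real_sqrt_mult[symmetric])
    also have "N^2 * (t / N) = t * N" using N by (simp add: power2_eq_square)
    finally show ?thesis by simp
  qed
  also have "\<dots> \<le> N * \<bar>S / N - mu\<bar>" using h N by (intro mult_left_mono) auto
  finally show ?thesis using e by simp
qed

lemma BH_bound:
  assumes l: "1 \<le> l" "l \<le> m" and t1: "1 \<le> \<iota>" and n1: "1 \<le> n"
  shows "emeasure (PA as) {D \<in> space (PiM {..<n} (\<lambda>_. Om)). gb m n \<iota> D f l < \<bar>est m n D f l - mean_rew R f l\<bar>}
     \<le> ennreal (2 * exp (- \<iota> / 2))"
proof -
  define K where "K = {k \<in> {..<n}. nf m f (as k) = l}"
  define \<mu> where "\<mu> = mean_rew R f l"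
  define BH where "BH = {D \<in> space (PiM {..<n} (\<lambda>_. Om)). gb m n \<iota> D f l < \<bar>est m n D f l - \<mu>\<bar>}"
  have finK: "finite K" unfolding K_def by simp
  interpret P: prob_space "PA as" by (rule PA_ps)
  have good: "Ncnt m n D f l = card K \<and> est m n D f l = (\<Sum>k\<in>K. snd (D k) f) / real (max (card K) 1)"
    if D: "\<forall>k\<in>{..<n}. fst (D k) = as k" for D
  proof -
    have setEq: "{k \<in> {..<n}. nf m f (fst (D k)) = l} = K" unfolding K_def using D by auto
    have N: "Ncnt m n D f l = card K" unfolding Ncnt_def setEq ..
    have "(\<Sum>k<n. snd (D k) f * (if nf m f (fst (D k)) = l then 1 else 0)) =
          (\<Sum>k\<in>{k \<in> {..<n}. nf m f (fst (D k)) = l}. snd (D k) f)"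
      by (subst sum.inter_filter, simp) (rule sum.cong, auto)
    thus ?thesis unfolding est_def N using setEq by simp
  qed
  have mBH: "BH \<in> sets (PA as)" unfolding BH_def PA_sets by measurable
  show ?thesis
  proof (cases "K = {}")
    case True
    have "AE D in PA as. D \<in> BH \<longrightarrow> D \<in> {}"
      using AE_PA_fst
    proof (rule eventually_mono, safe)
      fix D assume D: "\<forall>k\<in>{..<n}. fst (D k) = as k" and "D \<in> BH"
      hence lt: "gb m n \<iota> D f l < \<bar>est m n D f l - \<mu>\<bar>" unfolding BH_def by auto
      have "est m n D f l = 0" using good[OF D] True by simp
      moreover have "gb m n \<iota> D f l = sqrt \<iota>" using good[OF D] True by (simp add: gb_def)
      ultimately have "sqrt \<iota> < \<bar>\<mu>\<bar>" using lt by simp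
      moreover have "1 \<le> sqrt \<iota>" using t1 by simp
      moreover have "\<bar>\<mu>\<bar> \<le> 1" unfolding \<mu>_def by (rule mu_bnd[OF l])
      ultimately show "D \<in> {}" by linarith
    qed
    hence "emeasure (PA as) BH \<le> emeasure (PA as) {}" by (rule emeasure_mono_AE) simp
    thus ?thesis unfolding BH_def \<mu>_def by simp
  next
    case False
    define X :: "nat \<Rightarrow> (nat \<Rightarrow> (nat \<Rightarrow> 'f set) \<times> ('f \<Rightarrow> real)) \<Rightarrow> real"
      where "X = (\<lambda>k D. snd (D k) f)"
    have Kn: "K \<subseteq> {..<n}" unfolding K_def by auto
    interpret H: Hoeffding_ineq "PA as" K X "\<lambda>_. -1" "\<lambda>_. 1" "\<Sum>k\<in>K. P.expectation (X k)"
    proof unfold_locales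
      show "finite K" by (rule finK)
      have "P.indep_vars (\<lambda>_. Om) (\<lambda>k D. D k) {..<n}" by (rule indep_comp[OF n1])
      hence "P.indep_vars (\<lambda>_. borel) (\<lambda>k D. snd (D k) f) {..<n}"
        by (rule P.indep_vars_compose2[where Y="\<lambda>k x. snd x f"]) (unfold Om_def, measurable)
      thus "P.indep_vars (\<lambda>_. borel) X K" unfolding X_def by (rule P.indep_vars_subset[OF _ Kn])
      fix k assume k: "k \<in> K"
      hence kn: "k \<in> {..<n}" and kl: "nf m f (as k) = l" unfolding K_def by auto
      have "AE x in kap m R (as k). snd x f \<in> {-1..1}" by (rule AE_kap_bound[OF kl l(1)])
      thus "AE x in PA as. X k x \<in> {-1..1}" unfolding X_def
        by (intro AE_PiM_component[where P="\<lambda>x. snd x f \<in> {-1..1}"] kap_ps kn)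
    qed simp
    have mu_sum: "(\<Sum>k\<in>K. P.expectation (X k)) = real (card K) * \<mu>"
    proof -
      have "(\<Sum>k\<in>K. P.expectation (X k)) = (\<Sum>k\<in>K. \<mu>)"
        unfolding X_def \<mu>_def by (intro sum.cong refl exp_comp) (use l in \<open>auto simp: K_def\<close>)
      thus ?thesis by simp
    qed
    define \<epsilon> where "\<epsilon> = sqrt (\<iota> * real (card K))"
    have cK: "card K > 0" using False finK by (simp add: card_gt_0_iff)
    have sq: "(\<Sum>i\<in>K. ((1::real) - - 1)\<^sup>2) = 4 * real (card K)" by simp
    have Hb: "P.prob {x \<in> space (PA as). \<epsilon> \<le> \<bar>(\<Sum>i\<in>K. X i x) - (\<Sum>k\<in>K. P.expectation (X k))\<bar>}
        \<le> 2 * exp (-2 * \<epsilon>\<^sup>2 / (\<Sum>i\<in>K. ((1::real) - - 1)\<^sup>2))"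
      by (rule H.Hoeffding_ineq_abs_ge) (use cK t1 in \<open>auto simp: \<epsilon>_def\<close>)
    have "-2 * \<epsilon>\<^sup>2 / (\<Sum>i\<in>K. ((1::real) - - 1)\<^sup>2) = - \<iota> / 2"
      unfolding sq \<epsilon>_def using t1 cK by (simp add: field_simps)
    note Hb = Hb[unfolded this mu_sum]
    define HS where "HS = {x \<in> space (PA as). \<epsilon> \<le> \<bar>(\<Sum>i\<in>K. X i x) - real (card K) * \<mu>\<bar>}"
    have mK[measurable]: "\<And>i. i \<in> K \<Longrightarrow> (\<lambda>D. snd (D i) f) \<in> borel_measurable (PiM {..<n} (\<lambda>_. Om))"
      using Kn meas_sndk by auto
    have mHS: "HS \<in> sets (PA as)" unfolding HS_def X_def PA_sets space_PA
      by measurable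
    have "AE D in PA as. D \<in> BH \<longrightarrow> D \<in> HS"
      using AE_PA_fst
    proof (rule eventually_mono, safe)
      fix D assume D: "\<forall>k\<in>{..<n}. fst (D k) = as k" and "D \<in> BH"
      hence lt: "gb m n \<iota> D f l < \<bar>est m n D f l - \<mu>\<bar>" and sp: "D \<in> space (PA as)"
        unfolding BH_def space_PA by auto
      have mx: "real (max (card K) 1) = real (card K)" using cK by simp
      have "sqrt (\<iota> / real (card K)) < \<bar>(\<Sum>k\<in>K. snd (D k) f) / real (card K) - \<mu>\<bar>"
      proof -
        have mxn: "max (card K) (Suc 0) = card K" using cK by simp
        show ?thesis using lt good[OF D] unfolding gb_def by (simp add: mxn)
      qed
      hence "sqrt (\<iota> * real (card K)) \<le> \<bar>(\<Sum>k\<in>K. snd (D k) f) - real (card K) * \<mu>\<bar>"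
        by (rule aux_hoef[rotated 2]) (use cK t1 in auto)
      thus "D \<in> HS" unfolding HS_def X_def \<epsilon>_def using sp by simp
    qed
    hence "emeasure (PA as) BH \<le> emeasure (PA as) HS" by (rule emeasure_mono_AE) (rule mHS)
    also have "\<dots> = ennreal (P.prob HS)" by (simp add: P.emeasure_eq_measure)
    also have "\<dots> \<le> ennreal (2 * exp (- \<iota> / 2))" using Hb unfolding HS_def by (intro ennreal_leI) simp
    finally show ?thesis unfolding BH_def \<mu>_def .
  qed
qed


definition "Bad \<rho>' f l \<iota> = {as. dens m \<rho>' f l > 0 \<and>
   4 * \<iota> * real (max (card {k \<in> {..<n}. nf m f (as k) = l}) 1) < real n * dens m \<rho>' f l}"

lemma BC_bound:
  "emeasure (PA as) {D \<in> space (PiM {..<n} (\<lambda>_. Om)). dens m \<rho>' f l > 0 \<and>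
       4 * \<iota> * real (max (Ncnt m n D f l) 1) < real n * dens m \<rho>' f l}
     \<le> indicator (Bad \<rho>' f l \<iota>) as"
proof -
  define BC where "BC = {D \<in> space (PiM {..<n} (\<lambda>_. Om)). dens m \<rho>' f l > 0 \<and>
       4 * \<iota> * real (max (Ncnt m n D f l) 1) < real n * dens m \<rho>' f l}"
  interpret P: prob_space "PA as" by (rule PA_ps)
  have NK: "Ncnt m n D f l = card {k \<in> {..<n}. nf m f (as k) = l}"
    if D: "\<forall>k\<in>{..<n}. fst (D k) = as k" for D
  proof -
    have "{k \<in> {..<n}. nf m f (fst (D k)) = l} = {k \<in> {..<n}. nf m f (as k) = l}" using D by auto
    thus ?thesis unfolding Ncnt_def by simp
  qed
  show ?thesis
  proof (cases "as \<in> Bad \<rho>' f l \<iota>")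
    case True
    have "emeasure (PA as) BC \<le> emeasure (PA as) (space (PA as))" by (rule emeasure_space)
    thus ?thesis using True unfolding BC_def by (simp add: P.emeasure_space_1)
  next
    case False
    have "AE D in PA as. D \<in> BC \<longrightarrow> D \<in> {}"
      using AE_PA_fst
    proof (rule eventually_mono, safe)
      fix D assume D: "\<forall>k\<in>{..<n}. fst (D k) = as k" and "D \<in> BC"
      thus "D \<in> {}" using False NK[OF D] unfolding BC_def Bad_def by auto
    qed
    hence "emeasure (PA as) BC \<le> emeasure (PA as) {}" by (rule emeasure_mono_AE) simp
    thus ?thesis using False unfolding BC_def by simp
  qed
qed

lemma Bad_prob: assumes t1: "1 \<le> \<iota>"
  shows "emeasure (measure_pmf (PP \<rho>')) (Bad \<rho>' f l \<iota>) \<le> ennreal (exp (- \<iota>))"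
proof (cases "dens m \<rho>' f l > 0 \<and> 4 * \<iota> < real n * dens m \<rho>' f l")
  case False
  have "Bad \<rho>' f l \<iota> = {}"
  proof safe
    fix as assume as: "as \<in> Bad \<rho>' f l \<iota>"
    hence "4 * \<iota> * 1 \<le> 4 * \<iota> * real (max (card {k \<in> {..<n}. nf m f (as k) = l}) 1)"
      using t1 by (intro mult_left_mono) auto
    thus "as \<in> {}" using as False unfolding Bad_def by auto
  qed
  thus ?thesis by simp
next
  case True
  define d where "d = dens m \<rho>' f l"
  define c where "c = 1 - exp (-1::real)"
  define t where "t = real n * d / (4 * \<iota>)"
  define ind where "ind = (\<lambda>a. if nf m f a = l then (1::real) else 0)"
  have d: "0 < d" "d \<le> 1" "4 * \<iota> < real n * d" using True by (auto simp: d_def dens_def)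
  have c: "1/2 \<le> c" "c \<le> 1"
  proof -
    have "1 + 1 \<le> exp (1::real)" by (rule exp_ge_add_one_self)
    hence "exp (-1::real) \<le> 1/2" by (simp add: exp_minus field_simps)
    thus "1/2 \<le> c" unfolding c_def by simp
    show "c \<le> 1" unfolding c_def by simp
  qed
  have cardK: "real (card {k \<in> {..<n}. nf m f (as k) = l}) = (\<Sum>k<n. ind (as k))" for as
    unfolding ind_def by (simp add: sum.inter_filter[symmetric])
  have pw: "indicator (Bad \<rho>' f l \<iota>) as \<le> ennreal (exp t) * (\<Prod>k\<in>{..<n}. ennreal (exp (- ind (as k))))" for as
  proof -
    have eq: "ennreal (exp t) * (\<Prod>k\<in>{..<n}. ennreal (exp (- ind (as k)))) = ennreal (exp (t - (\<Sum>k<n. ind (as k))))"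
    proof -
      have "(\<Prod>k\<in>{..<n}. ennreal (exp (- ind (as k)))) = ennreal (\<Prod>k\<in>{..<n}. exp (- ind (as k)))"
        by (rule prod_ennreal) simp
      also have "(\<Prod>k\<in>{..<n}. exp (- ind (as k))) = exp (\<Sum>k<n. - ind (as k))"
        by (rule exp_sum[symmetric]) simp
      also have "(\<Sum>k<n. - ind (as k)) = - (\<Sum>k<n. ind (as k))" by (simp add: sum_negf)
      finally have "ennreal (exp t) * (\<Prod>k\<in>{..<n}. ennreal (exp (- ind (as k)))) =
          ennreal (exp t) * ennreal (exp (- (\<Sum>k<n. ind (as k))))" by simp
      also have "\<dots> = ennreal (exp t * exp (- (\<Sum>k<n. ind (as k))))" by (rule ennreal_mult''[symmetric]) simp
      also have "exp t * exp (- (\<Sum>k<n. ind (as k))) = exp (t - (\<Sum>k<n. ind (as k)))"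
        by (simp add: exp_diff exp_minus field_simps)
      finally show ?thesis .
    qed
    show ?thesis
    proof (cases "as \<in> Bad \<rho>' f l \<iota>")
      case True
      hence "4 * \<iota> * real (max (card {k \<in> {..<n}. nf m f (as k) = l}) 1) < real n * d"
        unfolding Bad_def d_def by auto
      moreover have "4 * \<iota> * real (card {k \<in> {..<n}. nf m f (as k) = l}) \<le>
          4 * \<iota> * real (max (card {k \<in> {..<n}. nf m f (as k) = l}) 1)"
        using t1 by (intro mult_left_mono) auto
      ultimately have "4 * \<iota> * real (card {k \<in> {..<n}. nf m f (as k) = l}) < real n * d" by linarith
      hence "real (card {k \<in> {..<n}. nf m f (as k) = l}) < t"
        unfolding t_def using t1 by (simp add: less_divide_eq mult_ac)
      hence "1 \<le> exp (t - (\<Sum>k<n. ind (as k)))" unfolding cardK by simp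
      thus ?thesis using True unfolding eq by simp
    qed (simp add: eq)
  qed
  have int1: "(\<integral>\<^sup>+a. ennreal (exp (- ind a)) \<partial>\<rho>') = ennreal (1 - c * d)"
  proof -
    have g: "exp (- ind a) = 1 - c * indicator {a. nf m f a = l} a" for a
      unfolding ind_def c_def by (simp add: indicator_def)
    have "(\<integral>\<^sup>+a. ennreal (exp (- ind a)) \<partial>\<rho>') = ennreal (measure_pmf.expectation \<rho>' (\<lambda>a. exp (- ind a)))"
      by (rule nn_integral_eq_integral) (auto intro!: int_pmf_bdd[where B="exp 0"] simp: ind_def)
    also have "measure_pmf.expectation \<rho>' (\<lambda>a. exp (- ind a)) = 1 - c * d"
    proof -
      have I: "integrable (measure_pmf \<rho>') (\<lambda>a. c * indicator {a. nf m f a = l} a)"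
        by (rule int_pmf_bdd[where B=1]) (use c in \<open>auto simp: indicator_def\<close>)
      show ?thesis unfolding g d_def dens_def
        by (subst Bochner_Integration.integral_diff[OF _ I]) simp_all
    qed
    finally show ?thesis .
  qed
  have "emeasure (measure_pmf (PP \<rho>')) (Bad \<rho>' f l \<iota>) = (\<integral>\<^sup>+as. indicator (Bad \<rho>' f l \<iota>) as \<partial>PP \<rho>')"
    by simp
  also have "\<dots> \<le> (\<integral>\<^sup>+as. ennreal (exp t) * (\<Prod>k\<in>{..<n}. ennreal (exp (- ind (as k)))) \<partial>PP \<rho>')"
    by (intro nn_integral_mono pw)
  also have "\<dots> = ennreal (exp t) * (\<integral>\<^sup>+as. (\<Prod>k\<in>{..<n}. ennreal (exp (- ind (as k)))) \<partial>PP \<rho>')"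
    by (rule nn_integral_cmult) simp
  also have "(\<integral>\<^sup>+as. (\<Prod>k\<in>{..<n}. ennreal (exp (- ind (as k)))) \<partial>PP \<rho>') = (\<Prod>k\<in>{..<n}. \<integral>\<^sup>+a. ennreal (exp (- ind a)) \<partial>\<rho>')"
    by (rule nn_integral_prod_Pi_pmf) simp
  also have "\<dots> = ennreal ((1 - c * d) ^ n)"
  proof -
    have cd: "0 \<le> 1 - c * d" using c d mult_le_one[of c d] by simp
    show ?thesis unfolding int1 by (simp add: ennreal_power[OF cd])
  qed
  also have "ennreal (exp t) * \<dots> = ennreal (exp t * (1 - c * d) ^ n)"
    by (rule ennreal_mult''[symmetric]) (use c d mult_le_one[of c d] in simp)
  also have "\<dots> \<le> ennreal (exp (- \<iota>))"
  proof (rule ennreal_leI)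
    have "(1 - c * d) ^ n \<le> exp (- (c * d)) ^ n"
      using c d by (intro power_mono) (auto simp: mult_le_one intro: order.trans[OF _ exp_ge_add_one_self])
    also have "\<dots> = exp (- (c * d * real n))" by (simp add: exp_of_nat_mult[symmetric] mult_ac)
    finally have "exp t * (1 - c * d) ^ n \<le> exp t * exp (- (c * d * real n))" by (intro mult_left_mono) auto
    also have "\<dots> = exp (t - c * d * real n)" by (simp add: exp_diff exp_minus field_simps)
    also have "\<dots> \<le> exp (- \<iota>)"
    proof -
      have "t \<le> real n * d / 4" unfolding t_def using t1 d
        by (intro divide_left_mono) auto
      moreover have "real n * d / 2 \<le> c * d * real n"
      proof -
        have "real n * d * (1/2) \<le> real n * d * c" using c d by (intro mult_left_mono) auto
        thus ?thesis by (simp add: mult_ac)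
      qed
      ultimately show ?thesis using d by simp
    qed
    finally show "exp t * (1 - c * d) ^ n \<le> exp (- \<iota>)" .
  qed
  finally show ?thesis .
qed

end



theorem theorem3:
  fixes m n :: nat
    and A :: "nat \<Rightarrow> ('f::finite) set set"
    and R :: "'f \<Rightarrow> nat \<Rightarrow> real measure"
    and \<rho> :: "(nat \<Rightarrow> 'f set) pmf"
    and \<pi>s :: "nat \<Rightarrow> 'f set pmf"
    and \<delta> \<iota> :: real
  assumes "m \<ge> 1" and "n \<ge> 1"
    and "\<forall>i<m. finite (A i) \<and> A i \<noteq> {}"
    and "set_pmf \<rho> \<subseteq> PiE {..<m} A"
    and "\<forall>f l. 1 \<le> l \<and> l \<le> m \<longrightarrow> prob_space (R f l) \<and> sets (R f l) = sets borel
            \<and> (AE x in R f l. -1 \<le> x \<and> x \<le> 1)"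
    and "0 < \<delta>" and "\<delta> < 1"
    and "\<iota> = 2 * ln (4 * (real m + 1) * real CARD('f) / \<delta>)"
    and "is_NE m A R \<pi>s"
    and "one_unit_dev m A \<rho> \<pi>s"
  shows "\<exists>E \<in> sets (data_meas m n R \<rho>). measure (data_meas m n R \<rho>) E \<ge> 1 - \<delta> \<and>
           (\<forall>D\<in>E. \<forall>\<pi>out. is_output m A n \<iota> D \<pi>out \<longrightarrow>
              Gap m A R \<pi>out \<le> 8 * sqrt (real m + 1) * C_facility m A \<rho> \<pi>s * \<iota> * real CARD('f) / sqrt (real n))"
proof -
  note m1 = assms(1) and n1 = assms(2) and Afin = assms(3) and HR = assms(5)
    and d0 = assms(6) and d1 = assms(7) and iota = assms(8) and NE = assms(9) and OUD = assms(10)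
  define F where "F = real CARD('f)"
  define x where "x = 4 * (real m + 1) * F / \<delta>"
  have F1: "1 \<le> F" unfolding F_def by (simp add: Suc_le_eq)
  have x8: "8 \<le> x"
  proof -
    have "8 * \<delta> \<le> 4 * (real m + 1) * F"
    proof -
      have "8 * \<delta> \<le> 8 * 1" using d1 by simp
      also have "\<dots> \<le> 4 * (real m + 1) * F"
      proof -
        have "2 * 1 \<le> (real m + 1) * F" using m1 F1 by (intro mult_mono) auto
        hence "8 * 1 \<le> 4 * ((real m + 1) * F)" by linarith
        moreover have "4 * ((real m + 1) * F) = 4 * (real m + 1) * F" by (rule mult.assoc[symmetric])
        ultimately show ?thesis by linarith
      qed
      finally show ?thesis .
    qed
    thus ?thesis unfolding x_def using d0 by (simp add: le_divide_eq)
  qed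
  have iota_x: "\<iota> = 2 * ln x" unfolding iota x_def F_def ..
  have t1: "1 \<le> \<iota>"
  proof -
    have "exp 1 \<le> x" using exp_le x8 by simp
    hence "1 \<le> ln x" using x8 by (subst ln_ge_iff) auto
    thus ?thesis unfolding iota_x by simp
  qed
  have e2: "exp (- \<iota> / 2) = \<delta> / (4 * (real m + 1) * F)"
  proof -
    have "exp (- \<iota> / 2) = exp (- ln x)" unfolding iota_x by simp
    also have "\<dots> = 1 / x" using x8 by (simp add: exp_minus inverse_eq_divide)
    finally show ?thesis unfolding x_def by simp
  qed
  have e1: "exp (- \<iota>) \<le> exp (- \<iota> / 2)" using t1 by simp
  define M where "M = data_meas m n R \<rho>"
  have Msets: "sets M = sets (PiM {..<n} (\<lambda>_. Om))"
    unfolding M_def data_meas_def by (intro sets_PiM_cong refl sample_sets[OF HR])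
  have Mspace: "space M = space (PiM {..<n} (\<lambda>_. Om))" by (rule sets_eq_imp_space_eq[OF Msets])
  interpret P: prob_space M unfolding M_def data_meas_def by (intro prob_space_PiM sample_ps[OF HR])
  define BH where "BH = (\<lambda>(f, l). {D \<in> space (PiM {..<n} (\<lambda>_. Om)). gb m n \<iota> D f l < \<bar>est m n D f l - mean_rew R f l\<bar>})"
  define BC where "BC = (\<lambda>(f, l). {D \<in> space (PiM {..<n} (\<lambda>_. Om)). dens m \<rho> f l > 0 \<and>
       4 * \<iota> * real (max (Ncnt m n D f l) 1) < real n * dens m \<rho> f l})"
  define I where "I = (UNIV :: 'f set) \<times> {1..m}"
  define U where "U = (\<Union>p\<in>I. BH p \<union> BC p)"
  define E where "E = space M - U"
  have mBH: "BH p \<in> sets M" for p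
  proof -
    obtain f l where p: "p = (f, l)" by (cases p)
    show ?thesis unfolding Msets BH_def p
      by (simp, intro borel_measurable_less meas_gb[OF HR] borel_measurable_abs
          borel_measurable_diff meas_est[OF HR] borel_measurable_const)
  qed
  have mBC: "BC p \<in> sets M" for p
  proof -
    obtain f l where p: "p = (f, l)" by (cases p)
    have "{D \<in> space (PiM {..<n} (\<lambda>_. Om)). 4 * \<iota> * real (max (Ncnt m n D f l) 1) < real n * dens m \<rho> f l}
        \<in> sets (PiM {..<n} (\<lambda>_. Om))"
      by (intro borel_measurable_less borel_measurable_times meas_maxN[OF HR] borel_measurable_const)
    thus ?thesis unfolding Msets BC_def p by (cases "dens m \<rho> f l > 0") simp_all
  qed
  have mU: "U \<in> sets M" unfolding U_def I_def using mBH mBC by (intro sets.finite_UN) auto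
  have mE: "E \<in> sets M" unfolding E_def using mU by auto
  have emeas: "emeasure M B = (\<integral>\<^sup>+as. emeasure (PA m n R as) B \<partial>PP n \<rho>)" if B: "B \<in> sets M" for B
    unfolding M_def data_bind[OF HR]
    by (rule emeasure_bind[OF _ PA_meas[OF HR]]) (use B Msets in auto)
  have pBH: "P.prob (BH p) \<le> 2 * exp (- \<iota> / 2)" if p: "p \<in> I" for p
  proof -
    obtain f l where pf: "p = (f, l)" and l: "1 \<le> l" "l \<le> m" using p unfolding I_def by auto
    have "emeasure M (BH p) \<le> (\<integral>\<^sup>+as. ennreal (2 * exp (- \<iota> / 2)) \<partial>PP n \<rho>)"
      unfolding emeas[OF mBH] unfolding BH_def pf prod.case
      by (intro nn_integral_mono BH_bound[OF HR l t1 n1])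
    also have "\<dots> = ennreal (2 * exp (- \<iota> / 2))" by simp
    finally show ?thesis by (simp add: P.emeasure_eq_measure)
  qed
  have pBC: "P.prob (BC p) \<le> exp (- \<iota>)" if p: "p \<in> I" for p
  proof -
    obtain f l where pf: "p = (f, l)" using p unfolding I_def by auto
    have "emeasure M (BC p) \<le> (\<integral>\<^sup>+as. indicator (Bad m n \<rho> f l \<iota>) as \<partial>PP n \<rho>)"
      unfolding emeas[OF mBC] unfolding BC_def pf prod.case
      by (intro nn_integral_mono BC_bound[OF HR])
    also have "\<dots> = emeasure (measure_pmf (PP n \<rho>)) (Bad m n \<rho> f l \<iota>)" by simp
    also have "\<dots> \<le> ennreal (exp (- \<iota>))" by (rule Bad_prob[OF HR t1])
    finally show ?thesis by (simp add: P.emeasure_eq_measure)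
  qed
  have "P.prob U \<le> (\<Sum>p\<in>I. P.prob (BH p \<union> BC p))"
    unfolding U_def I_def using mBH mBC by (intro P.finite_measure_subadditive_finite) auto
  also have "\<dots> \<le> (\<Sum>p\<in>I. 2 * exp (- \<iota> / 2) + exp (- \<iota>))"
  proof (intro sum_mono)
    fix p assume p: "p \<in> I"
    have "P.prob (BH p \<union> BC p) \<le> P.prob (BH p) + P.prob (BC p)"
      using mBH mBC by (intro measure_Un_le) auto
    thus "P.prob (BH p \<union> BC p) \<le> 2 * exp (- \<iota> / 2) + exp (- \<iota>)" using pBH[OF p] pBC[OF p] by simp
  qed
  also have "\<dots> = F * real m * (2 * exp (- \<iota> / 2) + exp (- \<iota>))"
    unfolding I_def F_def by (simp add: card_cartesian_product)
  also have "\<dots> \<le> F * real m * (3 * exp (- \<iota> / 2))" using e1 F1 by (intro mult_left_mono) auto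
  also have "\<dots> = 3 * real m * \<delta> / (4 * (real m + 1))"
  proof -
    have Fz: "F \<noteq> 0" using F1 by simp
    have mz: "real m + 1 \<noteq> 0" by simp
    have q: "\<delta> / (4 * (real m + 1) * F) = (\<delta> / (4 * (real m + 1))) / F"
      by (simp add: divide_divide_eq_left mult_ac)
    have gen: "F * a * (3 * (y / F)) = a * 3 * y" for a y :: real
      using Fz by (simp add: field_simps)
    have "F * real m * (3 * ((\<delta> / (4 * (real m + 1))) / F)) = real m * 3 * (\<delta> / (4 * (real m + 1)))"
      by (rule gen)
    thus ?thesis unfolding e2 q by simp
  qed
  also have "\<dots> \<le> \<delta>" using d0 by (simp add: field_simps)
  finally have pU: "P.prob U \<le> \<delta>" .
  have pE: "1 - \<delta> \<le> P.prob E" unfolding E_def using P.prob_compl[OF mU] pU by simp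
  show ?thesis
  proof (intro bexI[of _ E] conjI ballI allI impI)
    show "E \<in> sets (data_meas m n R \<rho>)" using mE unfolding M_def .
    show "1 - \<delta> \<le> measure (data_meas m n R \<rho>) E" using pE unfolding M_def .
    fix D \<pi>out assume D: "D \<in> E" and out: "is_output m A n \<iota> D \<pi>out"
    have Dsp: "D \<in> space (PiM {..<n} (\<lambda>_. Om))" and DU: "D \<notin> U" using D unfolding E_def Mspace by auto
    have GH: "\<bar>est m n D f l - mean_rew R f l\<bar> \<le> gb m n \<iota> D f l" if "1 \<le> l" "l \<le> m" for f l
    proof -
      have "(f, l) \<in> I" unfolding I_def using that by auto
      hence "D \<notin> BH (f, l)" using DU unfolding U_def by auto
      thus ?thesis using Dsp unfolding BH_def by auto
    qed
    have GC: "real n * dens m \<rho> f l \<le> 4 * \<iota> * real (max (Ncnt m n D f l) 1)"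
      if "1 \<le> l" "l \<le> m" "dens m \<rho> f l > 0" for f l
    proof -
      have "(f, l) \<in> I" unfolding I_def using that by auto
      hence "D \<notin> BC (f, l)" using DU unfolding U_def by auto
      thus ?thesis using Dsp that unfolding BC_def by auto
    qed
    show "Gap m A R \<pi>out \<le> 8 * sqrt (real m + 1) * C_facility m A \<rho> \<pi>s * \<iota> * real CARD('f) / sqrt (real n)"
      by (rule gap_det[OF m1 n1 Afin HR t1 NE OUD GH GC out])
  qed
qed


end
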